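(* Let $|\psi\rangle\in\mathcal H_A\otimes\mathcal H_{A'}\otimes\mathcal H_B\otimes\mathcal H_{B'}$ be an embedding of a primitive $P_{X,Y}$. Then $$\Delta_\psi(P_{X,Y})=S(X;BB')-I(X;Y)=S(AA';Y)-I(X;Y).$$
   Context: A primitive is a joint distribution $P_{X,Y}$ on finite sets $\mathcal X\times\mathcal Y$. $\mathcal H_A,\mathcal H_B$ have computational orthonormal bases indexed by $\mathcal X$ and $\mathcal Y$; $\mathcal H_{A'},\mathcal H_{B'}$ are finite-dimensional (possibly trivial) work spaces of Alice and Bob. For a pure state $|\psi\rangle$ on $AA'BB'$, $X$ (resp. $Y$) denotes the outcome of measuring $A$ (resp. $B$) in the computational basis; entropic quantities are evaluated on the state obtained from $|\psi\rangle\langle\psi|$ by measuring exactly the registers named by $X$ or $Y$ and tracing out registers not mentioned (e.g. $S(X;BB')$: measure $A$, trace out $A'$, keep $BB'$ quantum; $S(AA';Y)$: measure $B$, trace out $B'$, keep $AA'$; $S(X;YB')$: measure $A,B$, trace out $A'$). Here $S(P;Q)=S(P)+S(Q)-S(PQ)$ with $S$ the von Neumann entropy, and $I(X;Y)$ is Shannon mutual information. $|\psi\rangle$ is an embedding of $P_{X,Y}$ if measuring $A$ and $B$ in the computational basis yields $(X,Y)$ distributed as $P_{X,Y}$ and $S(X;YB')=S(XA';Y)=I(X;Y)$. Its leakage is $\Delta_\psi(P_{X,Y}):=\max\{S(X;BB')-I(X;Y),\,S(AA';Y)-I(X;Y)\}$. *)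

theory Defs
  imports "Jordan_Normal_Form.Char_Poly" "HOL-Library.Multiset"
begin

definition eigvals_mset :: "complex mat \<Rightarrow> complex multiset" where
  "eigvals_mset A = (THE M. char_poly A = (\<Prod>a\<in>#M. [:- a, 1:]))"

definition eta :: "real \<Rightarrow> real" where
  "eta t = (if t \<le> 0 then 0 else - t * log 2 t)"

definition vn_entropy :: "complex mat \<Rightarrow> real" where
  "vn_entropy \<rho> = (\<Sum>e\<in>#eigvals_mset \<rho>. eta (Re e))"

text \<open>Entropy of an operator given as a function on a finite index set I
  (via an arbitrary enumeration of I; the result does not depend on it).\<close>
definition op_entropy :: "'i set \<Rightarrow> ('i \<Rightarrow> 'i \<Rightarrow> complex) \<Rightarrow> real" where
  "op_entropy I f = (let es = (SOME es. distinct es \<and> set es = I) in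
     vn_entropy (mat (length es) (length es) (\<lambda>(i,j). f (es ! i) (es ! j))))"

text \<open>A pure state on AA'BB' is a function psi on index lists [x,a,y,b] with
  x < d!0, a < d!1, y < d!2, b < d!3. Each register is either measured in the
  computational basis (Meas), kept quantum (Keep) or traced out (Tr).\<close>
datatype regmode = Meas | Keep | Tr

definition conf :: "nat list \<Rightarrow> regmode list \<Rightarrow> nat list set" where
  "conf d m = {c. length c = 4 \<and> (\<forall>r<4. if m ! r = Tr then c ! r = 0 else c ! r < d ! r)}"

definition full_conf :: "nat list \<Rightarrow> nat list set" where
  "full_conf d = conf d [Keep, Keep, Keep, Keep]"

definition agree :: "regmode list \<Rightarrow> nat list \<Rightarrow> nat list \<Rightarrow> bool" where
  "agree m c u = (\<forall>r<4. m ! r \<noteq> Tr \<longrightarrow> u ! r = c ! r)"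

text \<open>Matrix entries of the state obtained from |psi><psi| by tracing out the Tr registers
  and measuring (dephasing) the Meas registers.\<close>
definition reduced :: "(nat list \<Rightarrow> complex) \<Rightarrow> nat list \<Rightarrow> regmode list \<Rightarrow> nat list \<Rightarrow> nat list \<Rightarrow> complex" where
  "reduced \<psi> d m c c' =
     (if \<exists>r<4. m ! r = Meas \<and> c ! r \<noteq> c' ! r then 0
      else (\<Sum>u\<in>full_conf d. \<Sum>u'\<in>full_conf d.
              if agree m c u \<and> agree m c' u' \<and> (\<forall>r<4. m ! r = Tr \<longrightarrow> u ! r = u' ! r)
              then \<psi> u * cnj (\<psi> u') else 0))"

definition S_of :: "(nat list \<Rightarrow> complex) \<Rightarrow> nat list \<Rightarrow> regmode list \<Rightarrow> real" where
  "S_of \<psi> d m = op_entropy (conf d m) (reduced \<psi> d m)"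

definition mjoin :: "regmode \<Rightarrow> regmode \<Rightarrow> regmode" where
  "mjoin p q = (if p = Tr then q else p)"

definition q_mi :: "(nat list \<Rightarrow> complex) \<Rightarrow> nat list \<Rightarrow> regmode list \<Rightarrow> regmode list \<Rightarrow> real" where
  "q_mi \<psi> d m1 m2 = S_of \<psi> d m1 + S_of \<psi> d m2 - S_of \<psi> d (map2 mjoin m1 m2)"

definition "mX = [Meas, Tr, Tr, Tr]"
definition "mY = [Tr, Tr, Meas, Tr]"
definition "mBB' = [Tr, Tr, Keep, Keep]"
definition "mAA' = [Keep, Keep, Tr, Tr]"
definition "mYB' = [Tr, Tr, Meas, Keep]"
definition "mXA' = [Meas, Keep, Tr, Tr]"

definition shannon_mi :: "nat \<Rightarrow> nat \<Rightarrow> (nat \<Rightarrow> nat \<Rightarrow> real) \<Rightarrow> real" where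
  "shannon_mi nX nY P =
     (\<Sum>x<nX. eta (\<Sum>y<nY. P x y)) + (\<Sum>y<nY. eta (\<Sum>x<nX. P x y))
     - (\<Sum>x<nX. \<Sum>y<nY. eta (P x y))"

definition is_pure_state :: "nat list \<Rightarrow> (nat list \<Rightarrow> complex) \<Rightarrow> bool" where
  "is_pure_state d \<psi> = (length d = 4 \<and> (\<forall>r<4. d ! r \<ge> 1) \<and>
       (\<Sum>u\<in>full_conf d. (cmod (\<psi> u))\<^sup>2) = 1)"

definition is_primitive :: "nat \<Rightarrow> nat \<Rightarrow> (nat \<Rightarrow> nat \<Rightarrow> real) \<Rightarrow> bool" where
  "is_primitive nX nY P = (nX \<ge> 1 \<and> nY \<ge> 1 \<and> (\<forall>x<nX. \<forall>y<nY. P x y \<ge> 0) \<and>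
       (\<Sum>x<nX. \<Sum>y<nY. P x y) = 1)"

definition is_embedding :: "nat \<Rightarrow> nat \<Rightarrow> (nat \<Rightarrow> nat \<Rightarrow> real) \<Rightarrow> nat list \<Rightarrow> (nat list \<Rightarrow> complex) \<Rightarrow> bool" where
  "is_embedding nX nY P d \<psi> =
     (is_pure_state d \<psi> \<and> d ! 0 = nX \<and> d ! 2 = nY \<and>
      (\<forall>x<nX. \<forall>y<nY. P x y = (\<Sum>a<d ! 1. \<Sum>b<d ! 3. (cmod (\<psi> [x, a, y, b]))\<^sup>2)) \<and>
      q_mi \<psi> d mX mYB' = shannon_mi nX nY P \<and>
      q_mi \<psi> d mXA' mY = shannon_mi nX nY P)"

definition leakage :: "nat \<Rightarrow> nat \<Rightarrow> (nat \<Rightarrow> nat \<Rightarrow> real) \<Rightarrow> nat list \<Rightarrow> (nat list \<Rightarrow> complex) \<Rightarrow> real" where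
  "leakage nX nY P d \<psi> =
     max (q_mi \<psi> d mX mBB' - shannon_mi nX nY P) (q_mi \<psi> d mAA' mY - shannon_mi nX nY P)"

end

theory Submission
  imports Defs
begin


interpretation cpoly: comm_ring_hom "\<lambda>x::complex. [:x:]"
  by unfold_locales (auto simp: one_pCons)

lemma cpm_alt: "C \<in> carrier_mat k k \<Longrightarrow> char_poly_matrix (C::complex mat) = [:0,1:] \<cdot>\<^sub>m 1\<^sub>m k - map_mat (\<lambda>x. [:x:]) C"
  unfolding char_poly_matrix_def
proof (rule eq_matI)
  assume C: "C \<in> carrier_mat k k"
  fix i j assume "i < dim_row ([:0, 1:] \<cdot>\<^sub>m 1\<^sub>m k - cpoly.mat_hom C)" "j < dim_col ([:0, 1:] \<cdot>\<^sub>m 1\<^sub>m k - cpoly.mat_hom C)"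
  then have ij: "i < k" "j < k" using C by auto
  show "([:0, 1:] \<cdot>\<^sub>m 1\<^sub>m (dim_row C) + map_mat (\<lambda>a. [:- a:]) C) $$ (i, j) =
       ([:0, 1:] \<cdot>\<^sub>m 1\<^sub>m k - cpoly.mat_hom C) $$ (i, j)"
    using C ij by (simp only: index_add_mat index_minus_mat index_smult_mat index_map_mat index_one_mat carrier_matD dim_row_mat dim_col_mat diff_conv_add_uminus) (simp)
qed (auto)

lemma sylvester_cp:
  fixes A B :: "complex mat"
  assumes A: "A \<in> carrier_mat n m" and B: "B \<in> carrier_mat m n"
  shows "[:0,1:]^m * char_poly (A * B) = [:0,1:]^n * char_poly (B * A)"
proof -
  define X :: "complex poly" where "X = [:0,1:]"
  define a where "a = map_mat (\<lambda>x. [:x:]) A"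
  define b where "b = map_mat (\<lambda>x. [:x:]) B"
  have a: "a \<in> carrier_mat n m" and b: "b \<in> carrier_mat m n" using A B by (auto simp: a_def b_def)
  have ab: "char_poly_matrix (A * B) = X \<cdot>\<^sub>m 1\<^sub>m n - a * b"
    unfolding a_def b_def X_def
    using A B cpoly.mat_hom_mult[OF A B] cpm_alt[of "A*B" n] by auto
  have ba: "char_poly_matrix (B * A) = X \<cdot>\<^sub>m 1\<^sub>m m - b * a"
    unfolding a_def b_def X_def
    using A B cpoly.mat_hom_mult[OF B A] cpm_alt[of "B*A" m] by auto
  define N where "N = four_block_mat (X \<cdot>\<^sub>m 1\<^sub>m n) a b (1\<^sub>m m)"
  define L where "L = four_block_mat (1\<^sub>m n) (0\<^sub>m n m) (- b) (X \<cdot>\<^sub>m 1\<^sub>m m)"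
  define R where "R = four_block_mat (1\<^sub>m n) (0\<^sub>m n m) (- b) (1\<^sub>m m)"
  have N: "N \<in> carrier_mat (n+m) (n+m)" and L: "L \<in> carrier_mat (n+m) (n+m)"
    and R: "R \<in> carrier_mat (n+m) (n+m)" using a b by (auto simp: N_def L_def R_def)
  have c1: "X \<cdot>\<^sub>m 1\<^sub>m n \<in> carrier_mat n n" "1\<^sub>m n \<in> carrier_mat n n" "0\<^sub>m n m \<in> carrier_mat n m"
     "- b \<in> carrier_mat m n" "X \<cdot>\<^sub>m 1\<^sub>m m \<in> carrier_mat m m" "1\<^sub>m m \<in> carrier_mat m m"
    using b by auto
  have LN: "L * N = four_block_mat (X \<cdot>\<^sub>m 1\<^sub>m n) a (0\<^sub>m m n) (X \<cdot>\<^sub>m 1\<^sub>m m - b * a)"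
    unfolding L_def N_def
    apply (subst mult_four_block_mat[OF c1(2) c1(3) c1(4) c1(5) c1(1) a b c1(6)])
    apply (rule cong_four_block_mat)
  proof -
    show "1\<^sub>m n * (X \<cdot>\<^sub>m 1\<^sub>m n) + 0\<^sub>m n m * b = X \<cdot>\<^sub>m 1\<^sub>m n"
      using b by (simp add: left_mult_zero_mat[OF b])
    show "1\<^sub>m n * a + 0\<^sub>m n m * 1\<^sub>m m = a" using a by simp
    have "b * (X \<cdot>\<^sub>m 1\<^sub>m n) = X \<cdot>\<^sub>m b" using b by (simp add: mult_smult_distrib[OF b c1(2)])
    moreover have "(X \<cdot>\<^sub>m 1\<^sub>m m) * b = X \<cdot>\<^sub>m b" using b by (simp add: mult_smult_assoc_mat[OF c1(6) b])
    ultimately show "- b * (X \<cdot>\<^sub>m 1\<^sub>m n) + X \<cdot>\<^sub>m 1\<^sub>m m * b = 0\<^sub>m m n"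
      using b by (simp add: uminus_l_inv_mat[of "X \<cdot>\<^sub>m b" m n])
    have ba: "b * a \<in> carrier_mat m m" using a b by auto
    show "- b * a + X \<cdot>\<^sub>m 1\<^sub>m m * 1\<^sub>m m = X \<cdot>\<^sub>m 1\<^sub>m m - b * a"
      using comm_add_mat[of "- (b*a)" m m "X \<cdot>\<^sub>m 1\<^sub>m m"] add_uminus_minus_mat[OF c1(5) ba] ba
      using uminus_mult_left_mat[of b a] a b by simp
  qed
  have NR: "N * R = four_block_mat (X \<cdot>\<^sub>m 1\<^sub>m n - a * b) a (0\<^sub>m m n) (1\<^sub>m m)"
    unfolding R_def N_def
    apply (subst mult_four_block_mat[OF c1(1) a b c1(6) c1(2) c1(3) c1(4) c1(6)])
    apply (rule cong_four_block_mat)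
  proof -
    have ab: "a * b \<in> carrier_mat n n" using a b by auto
    show "X \<cdot>\<^sub>m 1\<^sub>m n * 1\<^sub>m n + a * - b = X \<cdot>\<^sub>m 1\<^sub>m n - a * b"
      using add_uminus_minus_mat[OF c1(1) ab] ab uminus_mult_right_mat[of a b] a b by simp
    show "X \<cdot>\<^sub>m 1\<^sub>m n * 0\<^sub>m n m + a * 1\<^sub>m m = a" using a
      by (simp add: right_mult_zero_mat[OF c1(1)])
    show "b * 1\<^sub>m n + 1\<^sub>m m * - b = 0\<^sub>m m n" using b add_uminus_minus_mat[OF b b] by simp
    show "b * 0\<^sub>m n m + 1\<^sub>m m * 1\<^sub>m m = 1\<^sub>m m" using b by (simp add: right_mult_zero_mat[OF b])
  qed
  have dL: "det L = X^m" unfolding L_def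
    by (subst det_four_block_mat_upper_right_zero[of _ n _ m]) (use b in auto)
  have dR: "det R = 1" unfolding R_def
    by (subst det_four_block_mat_upper_right_zero[of _ n _ m]) (use b in auto)
  have "det (L * N) = X^n * char_poly (B * A)"
    unfolding LN char_poly_def ba
    by (subst det_four_block_mat_lower_left_zero[of _ n _ m]) (use a b in auto)
  moreover have "det (N * R) = char_poly (A * B)"
    unfolding NR char_poly_def ab
    by (subst det_four_block_mat_lower_left_zero[of _ n _ m]) (use a b in auto)
  ultimately show ?thesis
    using det_mult[OF L N] det_mult[OF N R] dL dR unfolding X_def by (simp add: mult.commute)
qed


lemma prod_lin_inj:
  fixes M N :: "complex multiset"
  shows "(\<Prod>a\<in>#M. [:-a,1:]) = (\<Prod>a\<in>#N. [:-a,1:]) \<Longrightarrow> M = N"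
proof (induction M arbitrary: N)
  case empty
  show ?case
  proof (rule ccontr)
    assume "{#} \<noteq> N"
    then obtain b where b: "b \<in># N" by (metis multiset_nonemptyE)
    have "poly (\<Prod>a\<in>#N. [:-a,1:]) b = 0" using b
      by (auto simp: poly_prod_mset)
    with empty show False by simp
  qed
next
  case (add x M)
  have "poly (\<Prod>a\<in>#N. [:-a,1:]) x = 0" using add.prems[symmetric]
    by (auto simp: poly_prod_mset)
  then obtain b where b: "b \<in># N" "x - b = 0"
    by (auto simp: poly_prod_mset)
  then have xN: "x \<in># N" by simp
  then have N: "N = add_mset x (N - {#x#})" by simp
  have "[:-x,1:] * (\<Prod>a\<in>#M. [:-a,1:]) = [:-x,1:] * (\<Prod>a\<in>#N - {#x#}. [:-a,1:])"
    using add.prems N by (metis image_mset_add_mset prod_mset.add_mset)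
  moreover have nz: "[:-x,1:] \<noteq> 0" by simp
  ultimately have "(\<Prod>a\<in>#M. [:-a,1:]) = (\<Prod>a\<in>#N - {#x#}. [:-a,1:])"
    by (metis mult_left_cancel)
  then have "M = N - {#x#}" by (rule add.IH)
  then show ?case using N by simp
qed

lemma eigvals_mset_eq:
  assumes "char_poly A = (\<Prod>a\<in>#M. [:-a,1:])"
  shows "eigvals_mset A = M"
  unfolding eigvals_mset_def
  by (rule the1_equality) (use assms prod_lin_inj in auto)

lemma eigvals_exists:
  assumes A: "(A :: complex mat) \<in> carrier_mat n n"
  shows "char_poly A = (\<Prod>a\<in>#eigvals_mset A. [:-a,1:])"
proof -
  obtain as where "char_poly A = (\<Prod> a \<leftarrow> as. [:- a, 1:])" using char_poly_factorized[OF A] by blast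
  then have "char_poly A = (\<Prod>a\<in>#mset as. [:-a,1:])" by (metis mset_map prod_mset_prod_list)
  then show ?thesis using eigvals_mset_eq by metis
qed

lemma entropy_eq_cp:
  assumes A: "(A :: complex mat) \<in> carrier_mat n n" and B: "B \<in> carrier_mat m m"
    and cp: "[:0,1:]^m * char_poly A = [:0,1:]^n * char_poly B"
  shows "vn_entropy A = vn_entropy B"
proof -
  have rep: "(\<Prod>a\<in># replicate_mset k (0::complex). [:-a,1:]) = [:0,1:]^k" for k
    by (induction k) auto
  have "(\<Prod>a\<in># replicate_mset m 0 + eigvals_mset A. [:-a,1:])
      = (\<Prod>a\<in># replicate_mset n 0 + eigvals_mset B. [:-a,1:])"
    using cp eigvals_exists[OF A] eigvals_exists[OF B] rep by (simp)
  then have eq: "replicate_mset m 0 + eigvals_mset A = replicate_mset n 0 + eigvals_mset B"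
    by (rule prod_lin_inj)
  have "(\<Sum>e\<in># replicate_mset k (0::complex) + M. eta (Re e)) = (\<Sum>e\<in>#M. eta (Re e))" for k M
    by (simp add: eta_def)
  from this[of m "eigvals_mset A"] this[of n "eigvals_mset B"] eq
  show ?thesis unfolding vn_entropy_def by simp
qed


definition comp_modes :: "regmode list \<Rightarrow> regmode list \<Rightarrow> bool" where
  "comp_modes m1 m2 = (\<forall>r<4. (m1!r = Meas \<and> m2!r = Meas) \<or> (m1!r = Keep \<and> m2!r = Tr) \<or> (m1!r = Tr \<and> m2!r = Keep))"

definition comb :: "regmode list \<Rightarrow> nat list \<Rightarrow> nat list \<Rightarrow> nat list" where
  "comb m c c2 = map (\<lambda>r. if m!r = Tr then c2!r else c!r) [0..<4]"

definition agM :: "regmode list \<Rightarrow> nat list \<Rightarrow> nat list \<Rightarrow> bool" where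
  "agM m c c2 = (\<forall>r<4. m!r = Meas \<longrightarrow> c!r = c2!r)"

definition gfun :: "(nat list \<Rightarrow> complex) \<Rightarrow> regmode list \<Rightarrow> nat list \<Rightarrow> nat list \<Rightarrow> complex" where
  "gfun \<psi> m c c2 = (if agM m c c2 then \<psi> (comb m c c2) else 0)"

lemma comb_nth[simp]: "r < 4 \<Longrightarrow> comb m c c2 ! r = (if m!r = Tr then c2!r else c!r)"
  and comb_length[simp]: "length (comb m c c2) = 4"
  unfolding comb_def by auto

lemma comp_modes_sym: "comp_modes m1 m2 \<Longrightarrow> comp_modes m2 m1"
  unfolding comp_modes_def by blast

lemma gfun_sym:
  assumes cm: "comp_modes m1 m2"
  shows "gfun \<psi> m2 c2 c = gfun \<psi> m1 c c2"
proof -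
  have ag: "agM m2 c2 c = agM m1 c c2" using cm unfolding agM_def comp_modes_def by force
  have "agM m1 c c2 \<Longrightarrow> comb m2 c2 c = comb m1 c c2"
    by (rule nth_equalityI) (use cm in \<open>auto simp: agM_def comp_modes_def\<close>)
  then show ?thesis unfolding gfun_def ag by auto
qed

lemma conf_mem: "c \<in> conf d m \<longleftrightarrow> length c = 4 \<and> (\<forall>r<4. if m ! r = Tr then c ! r = 0 else c ! r < d ! r)"
  unfolding conf_def by simp

lemma four_cases: "(r::nat) < 4 \<Longrightarrow> r = 0 \<or> r = 1 \<or> r = 2 \<or> r = 3" by auto

lemma full_mem: "u \<in> full_conf d \<longleftrightarrow> length u = 4 \<and> (\<forall>r<4. u ! r < d ! r)"
proof -
  have "r < 4 \<Longrightarrow> [Keep, Keep, Keep, Keep] ! r = Keep" for r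
    using four_cases[of r] by auto
  then show ?thesis unfolding full_conf_def conf_mem by auto
qed

lemma conf_finite: "finite (conf d m)"
proof -
  let ?B = "d!0 + d!1 + d!2 + d!3 + 1"
  have "conf d m \<subseteq> {c. set c \<subseteq> {..<?B} \<and> length c = 4}"
  proof
    fix c assume c: "c \<in> conf d m"
    have "c!r < ?B" if r: "r < 4" for r
    proof -
      have "c!r \<le> d!r" using c r unfolding conf_mem by (metis less_imp_le zero_le)
      moreover have "d!r < ?B" using four_cases[OF r] by auto
      ultimately show ?thesis by linarith
    qed
    then show "c \<in> {c. set c \<subseteq> {..<?B} \<and> length c = 4}" using c unfolding conf_mem
      by (auto simp: in_set_conv_nth)
  qed
  moreover have "finite {c. set c \<subseteq> {..<?B} \<and> length c = (4::nat)}"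
    by (rule finite_lists_length_eq) simp
  ultimately show ?thesis by (rule finite_subset)
qed

lemma reduced_as_sum:
  assumes cm: "comp_modes m m'" and c: "c \<in> conf d m" and c': "c' \<in> conf d m"
  shows "reduced \<psi> d m c c' = (\<Sum>c2\<in>conf d m'. gfun \<psi> m c c2 * cnj (gfun \<psi> m c' c2))"
proof (cases "\<exists>r<4. m ! r = Meas \<and> c ! r \<noteq> c' ! r")
  case True
  then obtain r where r: "r < 4" "m!r = Meas" "c!r \<noteq> c'!r" by blast
  have z: "gfun \<psi> m c c2 * cnj (gfun \<psi> m c' c2) = 0" for c2
    using r unfolding gfun_def agM_def by auto
  have "(\<Sum>c2\<in>conf d m'. gfun \<psi> m c c2 * cnj (gfun \<psi> m c' c2)) = 0"
    by (rule sum.neutral) (use z in blast)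
  then show ?thesis using True unfolding reduced_def by simp
next
  case False
  let ?F = "full_conf d"
  let ?Q = "\<lambda>u u'. agree m c u \<and> agree m c' u' \<and> (\<forall>r<4. m ! r = Tr \<longrightarrow> u ! r = u' ! r)"
  let ?S = "{c2 \<in> conf d m'. agM m c c2}"
  let ?h = "\<lambda>c2. (comb m c c2, comb m c' c2)"
  have finF: "finite ?F" unfolding full_conf_def by (rule conf_finite)
  have ag': "agM m c' c2 = agM m c c2" for c2 using False unfolding agM_def by auto
  have "reduced \<psi> d m c c' = (\<Sum>u\<in>?F. \<Sum>u'\<in>?F. if ?Q u u' then \<psi> u * cnj (\<psi> u') else 0)"
    using False unfolding reduced_def by (simp only: if_False)
  also have "\<dots> = (\<Sum>p\<in>?F \<times> ?F. if ?Q (fst p) (snd p) then \<psi> (fst p) * cnj (\<psi> (snd p)) else 0)"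
    by (simp add: sum.cartesian_product case_prod_beta)
  also have "\<dots> = (\<Sum>p\<in>{p \<in> ?F \<times> ?F. ?Q (fst p) (snd p)}. \<psi> (fst p) * cnj (\<psi> (snd p)))"
    by (rule sum.inter_filter[symmetric]) (use finF in simp)
  also have "{p \<in> ?F \<times> ?F. ?Q (fst p) (snd p)} = ?h ` ?S"
  proof (intro equalityI subsetI)
    fix p assume p: "p \<in> {p \<in> ?F \<times> ?F. ?Q (fst p) (snd p)}"
    obtain u u' where uu: "p = (u, u')" by (cases p)
    from p uu have u: "u \<in> ?F" and u': "u' \<in> ?F" and Q: "?Q u u'" by auto
    define c2 where "c2 = map (\<lambda>r. if m!r = Tr then u!r else if m!r = Keep then 0 else c!r) [0..<4]"
    have c2n: "r < 4 \<Longrightarrow> c2 ! r = (if m!r = Tr then u!r else if m!r = Keep then 0 else c!r)" for r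
      unfolding c2_def by simp
    have "c2 \<in> conf d m'" unfolding conf_mem
    proof (intro conjI allI impI)
      show "length c2 = 4" unfolding c2_def by simp
      fix r :: nat assume r: "r < 4"
      show "if m' ! r = Tr then c2 ! r = 0 else c2 ! r < d ! r"
        using cm r c u c2n[OF r] unfolding comp_modes_def conf_mem full_mem
        by (metis regmode.distinct)
    qed
    moreover have "agM m c c2" unfolding agM_def using c2n by auto
    moreover have "comb m c c2 = u"
      by (rule nth_equalityI) (use u Q c2n in \<open>auto simp: full_mem agree_def\<close>)
    moreover have "comb m c' c2 = u'"
      by (rule nth_equalityI) (use u' Q c2n in \<open>auto simp: full_mem agree_def\<close>)
    ultimately show "p \<in> ?h ` ?S" using uu by auto
  next
    fix p assume "p \<in> ?h ` ?S"
    then obtain c2 where c2: "c2 \<in> conf d m'" "agM m c c2" and p: "p = ?h c2" by auto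
    have inF: "comb m x c2 \<in> ?F" if x: "x \<in> conf d m" for x
      unfolding full_mem
    proof (intro conjI allI impI)
      show "length (comb m x c2) = 4" by simp
      fix r :: nat assume r: "r < 4"
      show "comb m x c2 ! r < d ! r"
        using cm r x c2(1) unfolding comp_modes_def conf_mem
        by (cases "m!r") auto
    qed
    have "?Q (comb m c c2) (comb m c' c2)" unfolding agree_def by auto
    then show "p \<in> {p \<in> ?F \<times> ?F. ?Q (fst p) (snd p)}" using p inF[OF c] inF[OF c'] by auto
  qed
  also have "(\<Sum>p\<in>?h ` ?S. \<psi> (fst p) * cnj (\<psi> (snd p))) = (\<Sum>c2\<in>?S. \<psi> (comb m c c2) * cnj (\<psi> (comb m c' c2)))"
  proof (rule sum.reindex_cong[OF _ refl])
    show "inj_on ?h ?S"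
    proof (rule inj_onI)
      fix x y assume x: "x \<in> ?S" and y: "y \<in> ?S" and e: "?h x = ?h y"
      then have e1: "comb m c x = comb m c y" by simp
      show "x = y"
      proof (rule nth_equalityI)
        show "length x = length y" using x y by (simp add: conf_mem)
        fix r assume r: "r < length x"
        then have r4: "r < 4" using x by (simp add: conf_mem)
        have "comb m c x ! r = comb m c y ! r" using e1 by simp
        then show "x ! r = y ! r"
          using cm r4 x y unfolding comp_modes_def conf_mem agM_def
          by (cases "m!r") auto
      qed
    qed
  qed simp
  also have "\<dots> = (\<Sum>c2\<in>conf d m'. if agM m c c2 then \<psi> (comb m c c2) * cnj (\<psi> (comb m c' c2)) else 0)"
    by (rule sum.inter_filter) (rule conf_finite)
  also have "\<dots> = (\<Sum>c2\<in>conf d m'. gfun \<psi> m c c2 * cnj (gfun \<psi> m c' c2))"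
    by (rule sum.cong) (auto simp: gfun_def ag')
  finally show ?thesis .
qed



lemma sum_nth_distinct:
  assumes "distinct es"
  shows "(\<Sum>k\<in>{0..<length es}. f (es!k)) = sum f (set es)"
  using sum.reindex_bij_betw[OF bij_betw_nth[OF assms refl refl], of f]
  by (simp add: atLeast0LessThan)

lemma S_of_comp:
  assumes cm: "comp_modes m1 m2"
  shows "S_of \<psi> d m1 = S_of \<psi> d m2"
proof -
  have ex: "\<exists>es. distinct es \<and> set es = conf d m" for m
    using finite_distinct_list[OF conf_finite] by metis
  define es1 where "es1 = (SOME es. distinct es \<and> set es = conf d m1)"
  define es2 where "es2 = (SOME es. distinct es \<and> set es = conf d m2)"
  have e1: "distinct es1" "set es1 = conf d m1" using someI_ex[OF ex[of m1]] unfolding es1_def by auto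
  have e2: "distinct es2" "set es2 = conf d m2" using someI_ex[OF ex[of m2]] unfolding es2_def by auto
  define n1 where "n1 = length es1"
  define n2 where "n2 = length es2"
  define R1 where "R1 = mat n1 n1 (\<lambda>(i,j). reduced \<psi> d m1 (es1!i) (es1!j))"
  define R2 where "R2 = mat n2 n2 (\<lambda>(i,j). reduced \<psi> d m2 (es2!i) (es2!j))"
  have S1: "S_of \<psi> d m1 = vn_entropy R1"
    unfolding S_of_def op_entropy_def Let_def R1_def n1_def es1_def ..
  have S2: "S_of \<psi> d m2 = vn_entropy R2"
    unfolding S_of_def op_entropy_def Let_def R2_def n2_def es2_def ..
  define G where "G = mat n1 n2 (\<lambda>(i,j). gfun \<psi> m1 (es1!i) (es2!j))"
  define H where "H = mat n2 n1 (\<lambda>(j,i). cnj (gfun \<psi> m1 (es1!i) (es2!j)))"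
  have G: "G \<in> carrier_mat n1 n2" and H: "H \<in> carrier_mat n2 n1" unfolding G_def H_def by auto
  have in1: "i < n1 \<Longrightarrow> es1!i \<in> conf d m1" for i using e1 unfolding n1_def by (metis nth_mem)
  have in2: "i < n2 \<Longrightarrow> es2!i \<in> conf d m2" for i using e2 unfolding n2_def by (metis nth_mem)
  have R1GH: "R1 = G * H"
  proof (rule eq_matI)
    fix i j assume "i < dim_row (G * H)" "j < dim_col (G * H)"
    then have ij: "i < n1" "j < n1" using G H by auto
    have "(G * H) $$ (i,j) = (\<Sum>k\<in>{0..<n2}. gfun \<psi> m1 (es1!i) (es2!k) * cnj (gfun \<psi> m1 (es1!j) (es2!k)))"
      using ij G H unfolding G_def H_def by (simp add: scalar_prod_def)
    also have "\<dots> = (\<Sum>c2\<in>conf d m2. gfun \<psi> m1 (es1!i) c2 * cnj (gfun \<psi> m1 (es1!j) c2))"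
      unfolding n2_def using sum_nth_distinct[OF e1(1)] sum_nth_distinct[OF e2(1), of "\<lambda>c2. gfun \<psi> m1 (es1!i) c2 * cnj (gfun \<psi> m1 (es1!j) c2)"] e2(2)
      by simp
    also have "\<dots> = reduced \<psi> d m1 (es1!i) (es1!j)"
      by (rule reduced_as_sum[OF cm in1[OF ij(1)] in1[OF ij(2)], symmetric])
    finally show "R1 $$ (i,j) = (G * H) $$ (i,j)" using ij unfolding R1_def by simp
  qed (use G H in \<open>auto simp: R1_def\<close>)
  have R2HG: "R2 = transpose_mat (H * G)"
  proof (rule eq_matI)
    fix i j assume "i < dim_row (transpose_mat (H * G))" "j < dim_col (transpose_mat (H * G))"
    then have ij: "i < n2" "j < n2" using G H by auto
    have "transpose_mat (H * G) $$ (i,j) = (\<Sum>k\<in>{0..<n1}. cnj (gfun \<psi> m1 (es1!k) (es2!j)) * gfun \<psi> m1 (es1!k) (es2!i))"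
      using ij G H unfolding G_def H_def by (simp add: scalar_prod_def)
    also have "\<dots> = (\<Sum>c\<in>conf d m1. gfun \<psi> m1 c (es2!i) * cnj (gfun \<psi> m1 c (es2!j)))"
      unfolding n1_def using sum_nth_distinct[OF e1(1), of "\<lambda>c. gfun \<psi> m1 c (es2!i) * cnj (gfun \<psi> m1 c (es2!j))"] e1(2)
      by (simp add: mult.commute)
    also have "\<dots> = (\<Sum>c\<in>conf d m1. gfun \<psi> m2 (es2!i) c * cnj (gfun \<psi> m2 (es2!j) c))"
      using gfun_sym[OF cm] by simp
    also have "\<dots> = reduced \<psi> d m2 (es2!i) (es2!j)"
      by (rule reduced_as_sum[OF comp_modes_sym[OF cm] in2[OF ij(1)] in2[OF ij(2)], symmetric])
    finally show "R2 $$ (i,j) = transpose_mat (H * G) $$ (i,j)" using ij unfolding R2_def by simp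
  qed (use G H in \<open>auto simp: R2_def\<close>)
  have HG: "H * G \<in> carrier_mat n2 n2" using G H by auto
  have "[:0,1:]^n2 * char_poly R1 = [:0,1:]^n1 * char_poly R2"
    unfolding R1GH R2HG char_poly_transpose_mat[OF HG] by (rule sylvester_cp[OF G H])
  then have "vn_entropy R1 = vn_entropy R2"
    by (rule entropy_eq_cp[rotated 2]) (use G H R1GH R2HG in auto)
  then show ?thesis using S1 S2 by simp
qed


theorem lemma2:
  fixes nX nY :: nat and P :: "nat \<Rightarrow> nat \<Rightarrow> real"
    and d :: "nat list" and \<psi> :: "nat list \<Rightarrow> complex"
  assumes "is_primitive nX nY P"
    and "is_embedding nX nY P d \<psi>"
  shows "leakage nX nY P d \<psi> = q_mi \<psi> d mX mBB' - shannon_mi nX nY P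
    \<and> leakage nX nY P d \<psi> = q_mi \<psi> d mAA' mY - shannon_mi nX nY P"
proof -
  have a: "S_of \<psi> d [Tr,Tr,Keep,Keep] = S_of \<psi> d [Keep,Keep,Tr,Tr]"
    by (rule S_of_comp) (auto simp: comp_modes_def dest!: four_cases)
  have b: "S_of \<psi> d [Meas,Tr,Keep,Keep] = S_of \<psi> d [Meas,Keep,Tr,Tr]"
    by (rule S_of_comp) (auto simp: comp_modes_def dest!: four_cases)
  have c: "S_of \<psi> d [Keep,Keep,Meas,Tr] = S_of \<psi> d [Tr,Tr,Meas,Keep]"
    by (rule S_of_comp) (auto simp: comp_modes_def dest!: four_cases)
  have e: "S_of \<psi> d [Meas,Tr,Meas,Keep] = S_of \<psi> d [Meas,Keep,Meas,Tr]"
    by (rule S_of_comp) (auto simp: comp_modes_def dest!: four_cases)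
  have emb: "q_mi \<psi> d mX mYB' = q_mi \<psi> d mXA' mY"
    using assms(2) unfolding is_embedding_def by simp
  have eq: "q_mi \<psi> d mX mBB' = q_mi \<psi> d mAA' mY"
    using emb a b c e
    by (simp add: q_mi_def mX_def mY_def mBB'_def mAA'_def mYB'_def mXA'_def mjoin_def)
  show ?thesis unfolding leakage_def eq by simp
qed
end
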